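(* Let $\mathcal{W}=\{W_1,\dots,W_N\}$ be a finite set of $d\times k$ real matrices and let $\mathcal{V}$ be a linear subspace of $\mathbb{S}^d$. Suppose $X_1^\star,\dots,X_N^\star\in\mathbb{S}^k_+$ are such that $X^\star:=\sum_{i=1}^N W_iX_i^\star W_i^T\in\mathcal{V}$ and $\sum_{i=1}^N\operatorname{rank}X_i^\star\ge\sum_{i=1}^N\operatorname{rank}X_i$ for all $X_1,\dots,X_N\in\mathbb{S}^k_+$ with $\sum_{i=1}^N W_iX_iW_i^T\in\mathcal{V}$. Then $\operatorname{rank}X^\star\ge\operatorname{rank}X$ for every $X\in\mathcal{V}\cap\mathcal{C}(\mathcal{W})^*$, where $\mathcal{C}(\mathcal{W})^*=\{\sum_{i=1}^N W_iX_iW_i^T: X_i\in\mathbb{S}^k_+\}$.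
   Context: $\mathbb{S}^d$ is the space of real symmetric $d\times d$ matrices, $\mathbb{S}^k_+$ the cone of $k\times k$ positive semidefinite matrices. *)

theory Defs
  imports "HOL-Analysis.Analysis"
begin

definition sym_mat :: "real^'n^'n \<Rightarrow> bool" where
  "sym_mat A \<longleftrightarrow> transpose A = A"

definition psd_mat :: "real^'n^'n \<Rightarrow> bool" where
  "psd_mat A \<longleftrightarrow> sym_mat A \<and> (\<forall>x. 0 \<le> x \<bullet> (A *v x))"

definition dual_cone :: "nat \<Rightarrow> (nat \<Rightarrow> real^'k^'d) \<Rightarrow> (real^'d^'d) set" where
  "dual_cone N W = {(\<Sum>i\<in>{1..N}. W i ** X i ** transpose (W i)) | X.
       \<forall>i\<in>{1..N}. psd_mat (X i :: real^'k^'k)}"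

end

theory Submission imports Defs begin

definition kerm :: "real^'n^'m \<Rightarrow> (real^'n) set" where
  "kerm A = {x. A *v x = 0}"

lemma kerm_orth: "kerm A = {y. \<forall>x\<in>range (\<lambda>z. transpose A *v z). orthogonal x y}"
proof -
  have "A *v y = 0 \<longleftrightarrow> (\<forall>z. (transpose A *v z) \<bullet> y = 0)" for y
  proof -
    have e: "(transpose A *v z) \<bullet> y = z \<bullet> (A *v y)" for z
      by (metis dot_lmul_matrix transpose_transpose vector_transpose_matrix)
    show ?thesis unfolding e by (metis inner_zero_right inner_eq_zero_iff)
  qed
  then show ?thesis by (auto simp: kerm_def orthogonal_def)
qed

lemma subspace_kerm: "subspace (kerm A)"
  unfolding kerm_orth by (rule subspace_orthogonal_to_vectors)

lemma rank_nullity_mat: "dim (kerm A) + rank A = dim (UNIV :: (real^'n) set)"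
  for A :: "real^'n^'m"
proof -
  let ?R = "range (\<lambda>z. transpose A *v z)"
  have sR: "subspace ?R"
    by (rule linear_subspace_image[OF matrix_vector_mul_linear subspace_UNIV])
  have "dim {y \<in> UNIV. \<forall>x \<in> ?R. orthogonal x y} + dim ?R = dim (UNIV :: (real^'n) set)"
    by (rule dim_subspace_orthogonal_to_vectors[OF sR subspace_UNIV]) simp
  moreover have "dim ?R = rank A"
    by (metis rank_dim_range rank_transpose)
  ultimately show ?thesis by (simp add: kerm_orth)
qed

lemma rank_le_kerm:
  fixes A B :: "real^'n^'m"
  assumes "kerm A \<subseteq> kerm B" shows "rank B \<le> rank A"
  using rank_nullity_mat[of A] rank_nullity_mat[of B] dim_subset[OF assms] by linarith

lemma psd_zero:
  fixes A :: "real^'n^'n"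
  assumes "psd_mat A" "x \<bullet> (A *v x) = 0"
  shows "A *v x = 0"
proof -
  let ?y = "A *v x"
  have sym: "transpose A = A" using assms(1) by (simp add: psd_mat_def sym_mat_def)
  have symd: "x \<bullet> (A *v y) = y \<bullet> (A *v x)" for y
    by (metis dot_lmul_matrix inner_commute sym vector_transpose_matrix)
  define a where "a = ?y \<bullet> ?y"
  define c where "c = ?y \<bullet> (A *v ?y)"
  have c0: "c \<ge> 0" using assms(1) by (simp add: psd_mat_def c_def)
  have a0: "a \<ge> 0" by (simp add: a_def)
  have q: "0 \<le> t * t * c - 2 * t * a" for t :: real
  proof -
    have "0 \<le> (x - t *\<^sub>R ?y) \<bullet> (A *v (x - t *\<^sub>R ?y))"
      using assms(1) by (simp add: psd_mat_def)
    also have "\<dots> = x \<bullet> (A *v x) - t * (x \<bullet> (A *v ?y)) - t * (?y \<bullet> (A *v x)) + t * t * c"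
      by (simp add: matrix_vector_mult_diff_distrib matrix_vector_mult_scaleR inner_diff_left inner_diff_right algebra_simps c_def)
    also have "\<dots> = t * t * c - 2 * t * a"
      using assms(2) symd[of ?y] by (simp add: a_def)
    finally show ?thesis .
  qed
  have "a = 0"
  proof (rule ccontr)
    assume "a \<noteq> 0"
    then have ap: "a > 0" using a0 by simp
    define t where "t = a / (c + 1)"
    have tp: "t > 0" using ap c0 by (simp add: t_def)
    have "t * c \<le> a" using c0 ap by (simp add: t_def field_simps)
    then have "t * (t * c) \<le> t * a" using tp by (simp add: mult_left_mono)
    then have "t * t * c - 2 * t * a < 0" using tp ap by (simp add: algebra_simps)
    with q[of t] show False by simp
  qed
  then show ?thesis by (simp add: a_def)
qed

lemma sum_mv: "(\<Sum>i\<in>S. f i) *v v = (\<Sum>i\<in>S. f i *v v)"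
  by (induction S rule: infinite_finite_induct) (simp_all add: matrix_vector_mult_add_rdistrib)

lemma term_mv: "(W ** A ** transpose W) *v v = W *v (A *v (transpose W *v v))"
  by (simp only: matrix_vector_mul_assoc matrix_mul_assoc)

lemma tw: "(v::real^'m) v* (W::real^'n^'m) = transpose W *v v"
  using vector_transpose_matrix[of v "transpose W"] unfolding transpose_transpose .

lemma dot_tw: "(v::real^'m) \<bullet> ((W::real^'n^'m) *v y) = (transpose W *v v) \<bullet> y"
  using dot_lmul_matrix[of v W y] unfolding tw by simp

lemma term_quad: "(v::real^'m) \<bullet> (((W::real^'n^'m) ** A ** transpose W) *v v) = (transpose W *v v) \<bullet> (A *v (transpose W *v v))"
  unfolding term_mv by (rule dot_tw)

lemma sum_kerm:
  fixes W :: "nat \<Rightarrow> real^'k^'d" and A :: "nat \<Rightarrow> real^'k^'k"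
  assumes fin: "finite S" and psd: "\<forall>i\<in>S. psd_mat (A i)"
    and v: "(\<Sum>i\<in>S. W i ** A i ** transpose (W i)) *v v = 0"
  shows "\<forall>i\<in>S. A i *v (transpose (W i) *v v) = 0"
proof -
  define q where "q i = (transpose (W i) *v v) \<bullet> (A i *v (transpose (W i) *v v))" for i
  have "v \<bullet> ((\<Sum>i\<in>S. W i ** A i ** transpose (W i)) *v v) = 0" using v by simp
  moreover have "v \<bullet> ((\<Sum>i\<in>S. W i ** A i ** transpose (W i)) *v v) = (\<Sum>i\<in>S. q i)"
    unfolding sum_mv inner_sum_right q_def by (rule sum.cong) (rule refl, rule term_quad)
  ultimately have s0: "(\<Sum>i\<in>S. q i) = 0" by simp
  have nn: "\<forall>i\<in>S. 0 \<le> q i"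
    using psd unfolding psd_mat_def q_def by blast
  have "\<forall>i\<in>S. q i = 0"
    using sum_nonneg_eq_0_iff[OF fin] nn s0 by blast
  then show ?thesis using psd psd_zero unfolding q_def by blast
qed

lemma matrix_add_rdistrib': "((A + B) ** C) = (A ** C) + (B ** (C::'a::semiring_1^'p^'n))"
  by (vector matrix_matrix_mult_def sum.distrib[symmetric] field_simps)

lemma transpose_add': "transpose (A + B) = transpose A + (transpose B :: real^'n^'m)"
  by (simp add: transpose_def vec_eq_iff)

lemma psd_add: "psd_mat A \<Longrightarrow> psd_mat B \<Longrightarrow> psd_mat (A + B)"
  unfolding psd_mat_def sym_mat_def transpose_add' matrix_vector_mult_add_rdistrib inner_add_right
  by (metis add_nonneg_nonneg)

theorem lemma6:
  fixes N :: nat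
    and W :: "nat \<Rightarrow> real^'k^'d"
    and V :: "(real^'d^'d) set"
    and Xs :: "nat \<Rightarrow> real^'k^'k"
  assumes V_sub: "subspace V"
    and V_sym: "\<forall>A\<in>V. sym_mat A"
    and Xs_psd: "\<forall>i\<in>{1..N}. psd_mat (Xs i)"
    and Xs_in: "(\<Sum>i\<in>{1..N}. W i ** Xs i ** transpose (W i)) \<in> V"
    and Xs_max: "\<And>X :: nat \<Rightarrow> real^'k^'k.
        (\<forall>i\<in>{1..N}. psd_mat (X i)) \<Longrightarrow>
        (\<Sum>i\<in>{1..N}. W i ** X i ** transpose (W i)) \<in> V \<Longrightarrow>
        (\<Sum>i\<in>{1..N}. rank (X i)) \<le> (\<Sum>i\<in>{1..N}. rank (Xs i))"
  shows "\<forall>X\<in>V \<inter> dual_cone N W.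
           rank X \<le> rank (\<Sum>i\<in>{1..N}. W i ** Xs i ** transpose (W i))"
proof
  fix X assume XV: "X \<in> V \<inter> dual_cone N W"
  then obtain Xi where Xi_psd: "\<forall>i\<in>{1..N}. psd_mat (Xi i :: real^'k^'k)"
    and Xdef: "X = (\<Sum>i\<in>{1..N}. W i ** Xi i ** transpose (W i))"
    by (auto simp: dual_cone_def)
  define Xst where "Xst = (\<Sum>i\<in>{1..N}. W i ** Xs i ** transpose (W i))"
  define Y where "Y i = Xi i + Xs i" for i
  have Ypsd: "\<forall>i\<in>{1..N}. psd_mat (Y i)" using Xi_psd Xs_psd by (simp add: Y_def psd_add)
  have "(\<Sum>i\<in>{1..N}. W i ** Y i ** transpose (W i)) = X + Xst"
    by (simp add: Y_def Xdef Xst_def matrix_add_ldistrib matrix_add_rdistrib' sum.distrib)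
  also have "\<dots> \<in> V" using XV Xs_in V_sub by (simp add: Xst_def subspace_add)
  finally have "(\<Sum>i\<in>{1..N}. rank (Y i)) \<le> (\<Sum>i\<in>{1..N}. rank (Xs i))"
    using Xs_max[OF Ypsd] by blast
  have kY: "kerm (Y i) \<subseteq> kerm (Xs i) \<inter> kerm (Xi i)" if i: "i \<in> {1..N}" for i
  proof
    fix v assume "v \<in> kerm (Y i)"
    then have "v \<bullet> (Y i *v v) = 0" by (simp add: kerm_def)
    then have "v \<bullet> (Xi i *v v) + v \<bullet> (Xs i *v v) = 0"
      unfolding Y_def matrix_vector_mult_add_rdistrib inner_add_right .
    moreover have "v \<bullet> (Xi i *v v) \<ge> 0" "v \<bullet> (Xs i *v v) \<ge> 0"
      using Xi_psd Xs_psd i by (auto simp: psd_mat_def)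
    ultimately have "v \<bullet> (Xi i *v v) = 0" "v \<bullet> (Xs i *v v) = 0" by linarith+
    then show "v \<in> kerm (Xs i) \<inter> kerm (Xi i)"
      using psd_zero[of "Xi i" v] psd_zero[of "Xs i" v] Xi_psd Xs_psd i by (simp add: kerm_def)
  qed
  have rle: "rank (Xs i) \<le> rank (Y i)" if "i \<in> {1..N}" for i
    using kY[OF that] by (intro rank_le_kerm) blast
  have req: "rank (Y i) = rank (Xs i)" if "i \<in> {1..N}" for i
  proof (rule ccontr)
    assume "rank (Y i) \<noteq> rank (Xs i)"
    then have "rank (Xs i) < rank (Y i)" using rle[OF that] by simp
    then have "(\<Sum>i\<in>{1..N}. rank (Xs i)) < (\<Sum>i\<in>{1..N}. rank (Y i))"
      using that rle by (intro sum_strict_mono_ex1) auto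
    with \<open>(\<Sum>i\<in>{1..N}. rank (Y i)) \<le> _\<close> show False by simp
  qed
  have kXs: "kerm (Xs i) \<subseteq> kerm (Xi i)" if i: "i \<in> {1..N}" for i
  proof -
    have sub: "kerm (Y i) \<subseteq> kerm (Xs i)" using kY[OF i] by blast
    have "dim (kerm (Xs i)) \<le> dim (kerm (Y i))"
      using rank_nullity_mat[of "Y i"] rank_nullity_mat[of "Xs i"] req[OF i] by linarith
    then have "kerm (Y i) = kerm (Xs i)"
      using subspace_dim_equal[OF subspace_kerm subspace_kerm sub] by blast
    then show ?thesis using kY[OF i] by blast
  qed
  have "kerm Xst \<subseteq> kerm X"
  proof
    fix v assume "v \<in> kerm Xst"
    then have "\<forall>i\<in>{1..N}. Xs i *v (transpose (W i) *v v) = 0"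
      using sum_kerm[OF _ Xs_psd] by (simp add: kerm_def Xst_def)
    then have "\<forall>i\<in>{1..N}. Xi i *v (transpose (W i) *v v) = 0"
      using kXs unfolding kerm_def by blast
    then show "v \<in> kerm X"
      by (simp add: kerm_def Xdef sum_mv term_mv)
  qed
  then show "rank X \<le> rank Xst" by (rule rank_le_kerm)
qed

end
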